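(* Let $n\ge 3$, let $a<b<c$ be elements of $\mathcal{C}_n$ and let $k$ be an integer with $n-c\le k\le n-b-1$. Then the semiring $\mathcal{L}^{k}_{c}\left(\triangle^{(n)}\{a,b,c\}\right)=\{a_ib_{n-k-i}c_k:\ 0\le i\le n-k\}$ is isomorphic to the string $\mathcal{STR}^{(n-k)}\{a,b\}$.
   Context: For $N\ge1$, $\mathcal{C}_N=\{0,1,\dots,N-1\}$ with its usual order; $\widehat{\mathcal{E}}_{\mathcal{C}_N}$ is the set of all order-preserving maps $\mathcal{C}_N\to\mathcal{C}_N$ (not required to fix $0$), a semiring with $(\alpha+\beta)(x)=\max(\alpha(x),\beta(x))$ and $(\alpha\cdot\beta)(x)=\beta(\alpha(x))$. The notation $a_ib_\ell c_k$ (with $i+\ell+k=N$) denotes the map sending $0,\dots,i-1$ to $a$, the next $\ell$ elements to $b$ and the last $k$ to $c$. The triangle $\triangle^{(n)}\{a,b,c\}$ is the set of $\alpha\in\widehat{\mathcal{E}}_{\mathcal{C}_n}$ with image in $\{a,b,c\}$; its layer $\mathcal{L}^{k}_{c}$ is the set of elements mapping exactly $k$ elements to $c$ (a subsemiring for $n-c\le k\le n-b-1$). For $x<y$ in $\mathcal{C}_N$, the string $\mathcal{STR}^{(N)}\{x,y\}$ is the subsemiring of maps in $\widehat{\mathcal{E}}_{\mathcal{C}_N}$ with image in $\{x,y\}$. Isomorphism means semiring isomorphism. *)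

theory Defs
  imports Main
begin

text \<open>Maps C_N -> C_N are represented as functions nat => nat that vanish
  outside {0..<N} (canonical representative).\<close>

definition endo :: "nat \<Rightarrow> (nat \<Rightarrow> nat) set" where
  "endo N = {f. (\<forall>x y. x \<le> y \<longrightarrow> y < N \<longrightarrow> f x \<le> f y)
               \<and> (\<forall>x<N. f x < N) \<and> (\<forall>x\<ge>N. f x = 0)}"

definition eadd :: "(nat \<Rightarrow> nat) \<Rightarrow> (nat \<Rightarrow> nat) \<Rightarrow> (nat \<Rightarrow> nat)" where
  "eadd f g = (\<lambda>x. max (f x) (g x))"

definition emul :: "nat \<Rightarrow> (nat \<Rightarrow> nat) \<Rightarrow> (nat \<Rightarrow> nat) \<Rightarrow> (nat \<Rightarrow> nat)" where
  "emul N f g = (\<lambda>x. if x < N then g (f x) else 0)"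

definition triangle :: "nat \<Rightarrow> nat \<Rightarrow> nat \<Rightarrow> nat \<Rightarrow> (nat \<Rightarrow> nat) set" where
  "triangle n a b c = {f \<in> endo n. f ` {..<n} \<subseteq> {a, b, c}}"

definition layer :: "nat \<Rightarrow> nat \<Rightarrow> nat \<Rightarrow> nat \<Rightarrow> nat \<Rightarrow> (nat \<Rightarrow> nat) set" where
  "layer n a b c k = {f \<in> triangle n a b c. card {x. x < n \<and> f x = c} = k}"

definition str :: "nat \<Rightarrow> nat \<Rightarrow> nat \<Rightarrow> (nat \<Rightarrow> nat) set" where
  "str N x y = {f \<in> endo N. f ` {..<N} \<subseteq> {x, y}}"

text \<open>a_i b_l c_k in size N = i + l + k\<close>
definition abc :: "nat \<Rightarrow> nat \<Rightarrow> nat \<Rightarrow> nat \<Rightarrow> nat \<Rightarrow> nat \<Rightarrow> (nat \<Rightarrow> nat)" where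
  "abc N a b c i l = (\<lambda>x. if x < i then a else if x < i + l then b else if x < N then c else 0)"

definition semiring_iso :: "nat \<Rightarrow> (nat \<Rightarrow> nat) set \<Rightarrow> nat \<Rightarrow> (nat \<Rightarrow> nat) set \<Rightarrow> ((nat \<Rightarrow> nat) \<Rightarrow> (nat \<Rightarrow> nat)) \<Rightarrow> bool" where
  "semiring_iso N S M T h \<longleftrightarrow> bij_betw h S T \<and>
     (\<forall>f\<in>S. \<forall>g\<in>S. h (eadd f g) = eadd (h f) (h g) \<and> h (emul N f g) = emul M (h f) (h g))"

definition semiring_isomorphic :: "nat \<Rightarrow> (nat \<Rightarrow> nat) set \<Rightarrow> nat \<Rightarrow> (nat \<Rightarrow> nat) set \<Rightarrow> bool" where
  "semiring_isomorphic N S M T \<longleftrightarrow> (\<exists>h. semiring_iso N S M T h)"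

end

theory Submission
  imports Defs
begin

lemma layer_facts:
  fixes n a b c k :: nat
  assumes ab: "a < b" and bc: "b < c" and cn: "c < n" and kn: "k \<le> n"
    and f: "f \<in> layer n a b c k"
  shows "\<forall>x. (x < n - k \<longrightarrow> f x \<in> {a,b}) \<and> (n - k \<le> x \<and> x < n \<longrightarrow> f x = c)
           \<and> (n \<le> x \<longrightarrow> f x = 0)"
proof -
  have fe: "f \<in> endo n" and im: "f ` {..<n} \<subseteq> {a,b,c}"
    and cd: "card {x. x < n \<and> f x = c} = k"
    using f by (auto simp: layer_def triangle_def)
  have mono: "\<And>x y. x \<le> y \<Longrightarrow> y < n \<Longrightarrow> f x \<le> f y" and z: "\<And>x. n \<le> x \<Longrightarrow> f x = 0"
    using fe by (auto simp: endo_def)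
  have im': "\<And>x. x < n \<Longrightarrow> f x = a \<or> f x = b \<or> f x = c" using im by auto
  have up: "\<And>x y. x \<le> y \<Longrightarrow> y < n \<Longrightarrow> f x = c \<Longrightarrow> f y = c"
    using mono im' ab bc by (metis le_antisym less_imp_le not_less order.strict_trans)
  have fin: "finite {x. x < n \<and> f x = c}" by (rule finite_subset[of _ "{..<n}"]) auto
  have A: "f x \<noteq> c" if "x < n - k" for x
  proof
    assume fx: "f x = c"
    have "{x..<n} \<subseteq> {x. x < n \<and> f x = c}"
    proof
      fix y assume "y \<in> {x..<n}" thus "y \<in> {x. x < n \<and> f x = c}" using up[of x y] fx by simp
    qed
    hence "card {x..<n} \<le> k" using cd card_mono[OF fin] by metis
    thus False using that by simp
  qed
  have B: "f x = c" if "n - k \<le> x" "x < n" for x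
  proof (rule ccontr)
    assume fx: "f x \<noteq> c"
    have "{x. x < n \<and> f x = c} \<subseteq> {Suc x..<n}"
    proof
      fix y assume y: "y \<in> {x. x < n \<and> f x = c}"
      have "\<not> y \<le> x" using up[of y x] y fx that by auto
      thus "y \<in> {Suc x..<n}" using y by simp
    qed
    hence "k \<le> card {Suc x..<n}" using cd card_mono[OF finite_atLeastLessThan] by metis
    thus False using that kn by simp
  qed
  show ?thesis
  proof (intro allI conjI impI)
    fix x assume "x < n - k"
    thus "f x \<in> {a, b}" using A[of x] im'[of x] by auto
  next
    fix x assume "n - k \<le> x \<and> x < n" thus "f x = c" using B by blast
  next
    fix x assume "n \<le> x" thus "f x = 0" using z by blast
  qed
qed

lemma layer_char:
  fixes n a b c k :: nat
  assumes ab: "a < b" and bc: "b < c" and cn: "c < n" and kn: "k \<le> n"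
  shows "layer n a b c k = {abc n a b c i (n - k - i) | i. i \<le> n - k}"
proof
  show "layer n a b c k \<subseteq> {abc n a b c i (n - k - i) | i. i \<le> n - k}"
  proof
    fix f assume f: "f \<in> layer n a b c k"
    note F = layer_facts[OF ab bc cn kn f]
    have Fa: "\<And>x. x < n - k \<Longrightarrow> f x = a \<or> f x = b" using F by blast
    have Fc: "\<And>x. n - k \<le> x \<Longrightarrow> x < n \<Longrightarrow> f x = c" using F by blast
    have Fz: "\<And>x. n \<le> x \<Longrightarrow> f x = 0" using F by blast
    have mono: "\<And>x y. x \<le> y \<Longrightarrow> y < n \<Longrightarrow> f x \<le> f y"
      using f by (auto simp: layer_def triangle_def endo_def)
    define i where "i = (if \<exists>x<n-k. f x = b then LEAST x. x < n-k \<and> f x = b else n-k)"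
    have i1: "i \<le> n - k"
      unfolding i_def by (auto intro: Least_le order.trans[OF _ less_imp_le] dest: LeastI_ex)
    have i2: "f x = a" if "x < i" for x
    proof -
      have "x < n - k" using that i1 by simp
      moreover have "f x \<noteq> b"
      proof (cases "\<exists>x<n-k. f x = b")
        case True thus ?thesis using that not_less_Least[of x "\<lambda>x. x < n-k \<and> f x = b"] \<open>x < n-k\<close>
          unfolding i_def by auto
      qed (use \<open>x < n-k\<close> in auto)
      ultimately show ?thesis using Fa by blast
    qed
    have i3: "f x = b" if "i \<le> x" "x < n - k" for x
    proof -
      have ex: "\<exists>x<n-k. f x = b"
      proof (rule ccontr)
        assume "\<not> ?thesis" hence "i = n - k" unfolding i_def by auto
        thus False using that by simp
      qed
      hence "i < n - k \<and> f i = b" unfolding i_def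
        using LeastI_ex[of "\<lambda>x. x < n - k \<and> f x = b"] by simp
      hence fi: "f i = b" "i < n - k" by auto
      have "f i \<le> f x" using mono that by simp
      thus ?thesis using Fa[OF that(2)] fi ab by auto
    qed
    have "f = abc n a b c i (n - k - i)"
    proof
      fix x show "f x = abc n a b c i (n - k - i) x"
      proof -
        have e: "i + (n - k - i) = n - k" using i1 by simp
        show ?thesis
        proof (cases "x < i")
          case True thus ?thesis using i2 unfolding abc_def by simp
        next
          case F1: False
          show ?thesis
          proof (cases "x < n - k")
            case True thus ?thesis using i3[of x] F1 e unfolding abc_def by simp
          next
            case F2: False
            show ?thesis
            proof (cases "x < n")
              case True thus ?thesis using Fc[of x] F1 F2 e unfolding abc_def by simp
            next
              case False thus ?thesis using Fz[of x] F1 F2 e unfolding abc_def by simp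
            qed
          qed
        qed
      qed
    qed
    thus "f \<in> {abc n a b c i (n - k - i) | i. i \<le> n - k}" using i1 by auto
  qed
next
  show "{abc n a b c i (n - k - i) | i. i \<le> n - k} \<subseteq> layer n a b c k"
  proof clarify
    fix i assume i: "i \<le> n - k"
    let ?f = "abc n a b c i (n - k - i)"
    have "{x. x < n \<and> ?f x = c} = {n-k..<n}"
      using i ab bc unfolding abc_def by auto
    moreover have "?f \<in> endo n"
      using i ab bc cn unfolding abc_def endo_def by auto
    moreover have "?f ` {..<n} \<subseteq> {a,b,c}" unfolding abc_def by auto
    ultimately show "?f \<in> layer n a b c k" using kn
      unfolding layer_def triangle_def by auto
  qed
qed

lemma layer_facts2:
  fixes n a b c k :: nat
  assumes "a < b" "b < c" "c < n" "k \<le> n" "f \<in> layer n a b c k"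
  shows "\<And>x. x < n - k \<Longrightarrow> f x = a \<or> f x = b"
    and "\<And>x. n - k \<le> x \<Longrightarrow> x < n \<Longrightarrow> f x = c"
    and "\<And>x. n \<le> x \<Longrightarrow> f x = 0"
    and "\<And>x y. x \<le> y \<Longrightarrow> y < n \<Longrightarrow> f x \<le> f y"
  using layer_facts[OF assms] apply blast
  using layer_facts[OF assms] apply blast
  using layer_facts[OF assms] apply blast
  using assms(5) by (auto simp: layer_def triangle_def endo_def)

theorem proposition30:
  fixes n a b c k :: nat
  assumes "n \<ge> 3" and "a < b" and "b < c" and "c < n"
    and "n - c \<le> k" and "k \<le> n - b - 1"
  shows "layer n a b c k = {abc n a b c i (n - k - i) | i. i \<le> n - k}
         \<and> semiring_isomorphic n (layer n a b c k) (n - k) (str (n - k) a b)"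
proof
  have ab: "a < b" and bc: "b < c" and cn: "c < n" and kn: "k \<le> n" using assms by auto
  show "layer n a b c k = {abc n a b c i (n - k - i) | i. i \<le> n - k}"
    using layer_char[OF ab bc cn kn] .
  let ?m = "n - k"
  have bm: "b < ?m" and cm: "?m \<le> c" using assms by auto
  define h where "h f = (\<lambda>x. if x < ?m then f x else 0)" for f :: "nat \<Rightarrow> nat"
  note F = layer_facts2[OF ab bc cn kn]
  have inj: "inj_on h (layer n a b c k)"
  proof (rule inj_onI)
    fix f g assume f: "f \<in> layer n a b c k" and g: "g \<in> layer n a b c k" and e: "h f = h g"
    show "f = g"
    proof
      fix x
      show "f x = g x"
      proof (cases "x < ?m")
        case True thus ?thesis using fun_cong[OF e, of x] unfolding h_def by simp
      next
        case False
        show ?thesis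
        proof (cases "x < n")
          case True thus ?thesis using False F(2)[OF f] F(2)[OF g] by simp
        next
          case False thus ?thesis using F(3)[OF f] F(3)[OF g] by simp
        qed
      qed
    qed
  qed
  have sub: "h f \<in> str ?m a b" if f: "f \<in> layer n a b c k" for f
    unfolding str_def endo_def
  proof (intro CollectI conjI allI impI)
    fix x y :: nat assume "x \<le> y" "y < ?m"
    thus "h f x \<le> h f y" using F(4)[OF f, of x y] unfolding h_def by simp
  next
    fix x :: nat assume "x < ?m"
    thus "h f x < ?m" using F(1)[OF f, of x] ab bm unfolding h_def by auto
  next
    fix x :: nat assume "?m \<le> x"
    thus "h f x = 0" unfolding h_def by simp
  next
    show "h f ` {..<?m} \<subseteq> {a, b}" using F(1)[OF f] unfolding h_def by auto
  qed
  have sup: "str ?m a b \<subseteq> h ` layer n a b c k"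
  proof
    fix g assume g: "g \<in> str ?m a b"
    have gm: "\<And>x y. x \<le> y \<Longrightarrow> y < ?m \<Longrightarrow> g x \<le> g y" and gz: "\<And>x. ?m \<le> x \<Longrightarrow> g x = 0"
      and gi: "\<And>x. x < ?m \<Longrightarrow> g x = a \<or> g x = b"
      using g by (auto simp: str_def endo_def)
    have gb: "\<And>x. x < ?m \<Longrightarrow> g x < c" using gi ab bc by (metis less_trans)
    define f where "f x = (if x < ?m then g x else if x < n then c else 0)" for x
    have "f \<in> endo n" unfolding endo_def
    proof (intro CollectI conjI allI impI)
      fix x y :: nat assume xy: "x \<le> y" "y < n"
      show "f x \<le> f y"
      proof (cases "y < ?m")
        case True thus ?thesis using xy gm unfolding f_def by simp
      next
        case False
        have "f x \<le> c"
        proof (cases "x < ?m")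
          case True thus ?thesis using gb[of x] unfolding f_def by simp
        next
          case False thus ?thesis unfolding f_def by simp
        qed
        moreover have "f y = c" using False xy unfolding f_def by simp
        ultimately show ?thesis by simp
      qed
    next
      fix x :: nat assume "x < n" thus "f x < n"
      proof (cases "x < ?m")
        case True thus ?thesis using gb[of x] cn unfolding f_def by simp
      next
        case False thus ?thesis using \<open>x < n\<close> cn unfolding f_def by simp
      qed
    next
      fix x :: nat assume "n \<le> x" thus "f x = 0" unfolding f_def by auto
    qed
    moreover have "f ` {..<n} \<subseteq> {a,b,c}" using gi unfolding f_def by auto
    moreover have "{x. x < n \<and> f x = c} = {?m..<n}"
    proof (intro set_eqI iffI)
      fix x assume x: "x \<in> {x. x < n \<and> f x = c}"
      have "\<not> x < ?m" using x gb[of x] unfolding f_def by auto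
      thus "x \<in> {?m..<n}" using x by simp
    next
      fix x assume "x \<in> {?m..<n}" thus "x \<in> {x. x < n \<and> f x = c}" unfolding f_def by simp
    qed
    ultimately have "f \<in> layer n a b c k" using kn unfolding layer_def triangle_def by simp
    moreover have "h f = g" unfolding h_def f_def using gz by auto
    ultimately show "g \<in> h ` layer n a b c k" by blast
  qed
  have hom: "h (eadd f g) = eadd (h f) (h g) \<and> h (emul n f g) = emul ?m (h f) (h g)"
    if f: "f \<in> layer n a b c k" and g: "g \<in> layer n a b c k" for f g
  proof
    show "h (eadd f g) = eadd (h f) (h g)" unfolding h_def eadd_def by auto
    show "h (emul n f g) = emul ?m (h f) (h g)"
    proof
      fix x
      show "h (emul n f g) x = emul ?m (h f) (h g) x"
      proof (cases "x < ?m")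
        case True
        hence "f x < ?m" using F(1)[OF f, of x] ab bm by auto
        thus ?thesis using True unfolding h_def emul_def by auto
      qed (simp add: h_def emul_def)
    qed
  qed
  have "bij_betw h (layer n a b c k) (str ?m a b)"
    unfolding bij_betw_def using inj sub sup by blast
  thus "semiring_isomorphic n (layer n a b c k) ?m (str ?m a b)"
    unfolding semiring_isomorphic_def semiring_iso_def
    using hom by blast
qed

end
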